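(* Let $G_{\mathrm{inv}}$ be the $q$-grammar with master variables $S=\{x,y\}$, rule $x_j\mapsto q^jy_jx_{j+1}$, $y_j\mapsto q^jy_jx_{j+1}$, and order AIO, with $q$-derivative $D$, and let $\phi$ be the evaluation $\phi(x_j)=x$, $\phi(y_j)=y$ for all $j$ (into the field of rational functions in commuting indeterminates $q,x,y$ over $\mathbb{K}$). Then for every $i\ge0$, as formal power series in $u$, \[ \phi\big(\mathrm{Gen}^{(G_{\mathrm{inv}})}_q(x_i^{-1};u)\big)=\frac{1-x^{-1}y\,e_q\big((x-y)uq^i\big)}{x-y},\qquad \phi\big(\mathrm{Gen}^{(G_{\mathrm{inv}})}_q(y_i^{-1};u)\big)=\frac{1-xy^{-1}\,E_q\big((y-x)uq^i\big)}{y-x}. \]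
   Context: Let $\mathbb{K}$ be a commutative ring with unity and characteristic zero, $q$ an indeterminate. For a set $S$ of master variables, $\mathbb{S}=\{s_i:s\in S,\ i\ge0\}$ is a set of non-commuting variables, $F(\mathbb{S})$ the free group on $\mathbb{S}$ and $\mathbb{E}=\mathbb{K}[q][F(\mathbb{S})]$ its group algebra. A rule $R$ assigns to each $s_i$ an element $R(s_i)\in\mathbb{E}$, extended by $R(s_i^{-1})=-s_i^{-1}R(s_i)s_{i+1}^{-1}$. The up-arrow $\uparrow$ is the linear map replacing each letter $s_i^{\pm1}$ by $s_{i+1}^{\pm1}$. An order rewrites each word by permuting its letters; AIO stably reorders letters according to the position of their underlying variable in $x_0,y_0,x_1,y_1,\dots$. The $q$-derivative of a $q$-grammar $(S,R,\rho)$ is the $\mathbb{K}[q]$-linear map with $D(w_1\cdots w_n)=\sum_{j=1}^n\rho\big(w_1\cdots w_{j-1}R(w_j)\uparrow(w_{j+1}\cdots w_n)\big)$ for letters $w_j\in\mathbb{S}\cup\mathbb{S}^{-1}$, $D^0=\mathrm{id}$, $D^k=D\circ D^{k-1}$. An evaluation extends to a $\mathbb{K}[q]$-linear ring morphism with $\phi(s_i^{-1})=\phi(s_i)^{-1}$. $\mathrm{Gen}^{(G)}_q(f;u)=\sum_{n\ge0}D^n(f)\,u^n/(q;q)_n$ with $(q;q)_n=\prod_{i=1}^n(1-q^i)$, and $\phi$ is applied coefficientwise. $e_q(u)=\sum_{n\ge0}u^n/(q;q)_n$, $E_q(u)=\sum_{n\ge0}q^{\binom n2}u^n/(q;q)_n$.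 *)

theory Defs
  imports "HOL-Computational_Algebra.Computational_Algebra"
begin

datatype mvar = VX | VY

text \<open>A letter of S-bold union its inverses: (s, i, True) is s_i and (s, i, False) is s_i^{-1}.
  A word (list of letters) denotes the corresponding product in the free group F(S-bold).\<close>
type_synonym letter = "mvar \<times> nat \<times> bool"
type_synonym word = "letter list"

text \<open>Elements of E = K[q][F(S-bold)] are represented as finite formal sums
  (lists of coefficient/word pairs); all maps below are defined on words and
  extended linearly, so they are maps on E.\<close>
type_synonym 'k elem = "('k poly \<times> word) list"

type_synonym 'k rule = "mvar \<Rightarrow> nat \<Rightarrow> 'k elem"

definition up_letter :: "letter \<Rightarrow> letter" where
  "up_letter l = (case l of (s, i, b) \<Rightarrow> (s, Suc i, b))"

definition up_word :: "word \<Rightarrow> word" where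
  "up_word w = map up_letter w"

fun rule_ext :: "'k::comm_ring_1 rule \<Rightarrow> letter \<Rightarrow> 'k elem" where
  "rule_ext R (s, i, True) = R s i"
| "rule_ext R (s, i, False) =
     map (\<lambda>(c, w). (- c, [(s, i, False)] @ w @ [(s, Suc i, False)])) (R s i)"

text \<open>The order AIO: stable reordering of the letters according to the position of their
  underlying variable in x_0, y_0, x_1, y_1, ...  (sort_key is a stable sort).\<close>
definition aio_key :: "letter \<Rightarrow> nat" where
  "aio_key l = (case l of (s, i, b) \<Rightarrow> 2 * i + (case s of VX \<Rightarrow> 0 | VY \<Rightarrow> 1))"

definition AIO :: "word \<Rightarrow> word" where
  "AIO w = sort_key aio_key w"

text \<open>D(w_1 ... w_n) = sum_j rho(w_1 ... w_{j-1} R(w_j) up(w_{j+1} ... w_n)).\<close>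
definition qder_word :: "'k::comm_ring_1 rule \<Rightarrow> (word \<Rightarrow> word) \<Rightarrow> word \<Rightarrow> 'k elem" where
  "qder_word R \<rho> ws =
     concat (map (\<lambda>j. map (\<lambda>(c, w). (c, \<rho> (take j ws @ w @ up_word (drop (Suc j) ws))))
                           (rule_ext R (ws ! j)))
                 [0..<length ws])"

definition qder :: "'k::comm_ring_1 rule \<Rightarrow> (word \<Rightarrow> word) \<Rightarrow> 'k elem \<Rightarrow> 'k elem" where
  "qder R \<rho> f =
     concat (map (\<lambda>(c, w). map (\<lambda>(c', w'). (c * c', w')) (qder_word R \<rho> w)) f)"

definition qder_pow :: "'k::comm_ring_1 rule \<Rightarrow> (word \<Rightarrow> word) \<Rightarrow> nat \<Rightarrow> 'k elem \<Rightarrow> 'k elem" where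
  "qder_pow R \<rho> n = (qder R \<rho> ^^ n)"

text \<open>K[q, x, y] is represented as K[y][x][q] (outer indeterminate q, middle x, inner y),
  and K(q, x, y) as its field of fractions.\<close>
type_synonym 'k ratfun = "'k poly poly poly fract"

definition Qv :: "'k::idom ratfun" where
  "Qv = Fract [:0, 1:] 1"

definition Xv :: "'k::idom ratfun" where
  "Xv = Fract [:[:0, 1:]:] 1"

definition Yv :: "'k::idom ratfun" where
  "Yv = Fract [:[:[:0, 1:]:]:] 1"

definition coeff_emb :: "'k::idom poly \<Rightarrow> 'k ratfun" where
  "coeff_emb c = Fract (map_poly (\<lambda>a. [:[:a:]:]) c) 1"

definition eval_word :: "(mvar \<Rightarrow> nat \<Rightarrow> 'k::idom ratfun) \<Rightarrow> word \<Rightarrow> 'k ratfun" where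
  "eval_word ev w = prod_list (map (\<lambda>(s, i, b). if b then ev s i else inverse (ev s i)) w)"

definition eval_elem :: "(mvar \<Rightarrow> nat \<Rightarrow> 'k::idom ratfun) \<Rightarrow> 'k elem \<Rightarrow> 'k ratfun" where
  "eval_elem ev f = sum_list (map (\<lambda>(c, w). coeff_emb c * eval_word ev w) f)"

definition qpoch :: "nat \<Rightarrow> 'k::idom ratfun" where
  "qpoch n = (\<Prod>i=1..n. 1 - Qv ^ i)"

definition gen_eval ::
  "'k::idom rule \<Rightarrow> (word \<Rightarrow> word) \<Rightarrow> (mvar \<Rightarrow> nat \<Rightarrow> 'k ratfun) \<Rightarrow> 'k elem \<Rightarrow> 'k ratfun fps" where
  "gen_eval R \<rho> ev f = Abs_fps (\<lambda>n. eval_elem ev (qder_pow R \<rho> n f) / qpoch n)"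

definition e_q :: "'k::idom ratfun fps" where
  "e_q = Abs_fps (\<lambda>n. 1 / qpoch n)"

definition E_q :: "'k::idom ratfun fps" where
  "E_q = Abs_fps (\<lambda>n. Qv ^ (n choose 2) / qpoch n)"

definition R_inv :: "'k::comm_ring_1 rule" where
  "R_inv s j = [(monom 1 j, [(VY, j, True), (VX, Suc j, True)])]"

definition phi_inv :: "mvar \<Rightarrow> nat \<Rightarrow> 'k::idom ratfun" where
  "phi_inv s j = (case s of VX \<Rightarrow> Xv | VY \<Rightarrow> Yv)"

end

theory Submission
  imports Defs "HOL-Library.Function_Algebras"
begin

definition cemb :: "'k::idom poly \<Rightarrow> 'k poly poly poly" where
  "cemb c = map_poly (\<lambda>a. [:[:a:]:]) c"

lemma cemb_add: "cemb (a + b) = cemb a + cemb b"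
  unfolding cemb_def by (intro poly_eqI) (simp add: coeff_map_poly)

lemma cemb_minus: "cemb (- a) = - cemb a"
  unfolding cemb_def by (intro poly_eqI) (simp add: coeff_map_poly)

lemma cemb_pCons: "cemb (pCons a p) = pCons [:[:a:]:] (cemb p)"
  unfolding cemb_def by (simp add: map_poly_pCons)

lemma cemb_smult: "cemb (smult a p) = smult [:[:a:]:] (cemb p)"
  unfolding cemb_def by (rule map_poly_smult) simp_all

lemma cemb_mult: "cemb (a * b) = cemb a * cemb b"
proof (induction a)
  case (pCons x p)
  show ?case
    by (simp add: cemb_add cemb_smult cemb_pCons pCons.IH)
qed (simp add: cemb_def)

lemma cemb_1: "cemb 1 = 1"
  unfolding cemb_def by (simp add: map_poly_pCons one_pCons)

lemma coeff_emb_alt: "coeff_emb c = Fract (cemb c) 1"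
  unfolding coeff_emb_def cemb_def by simp

lemma coeff_emb_mult: "coeff_emb (a * b) = coeff_emb a * coeff_emb (b :: 'k::idom poly)"
  by (simp add: coeff_emb_alt cemb_mult)

lemma coeff_emb_add: "coeff_emb (a + b) = coeff_emb a + coeff_emb (b :: 'k::idom poly)"
  by (simp add: coeff_emb_alt cemb_add)

lemma coeff_emb_minus: "coeff_emb (- a) = - coeff_emb (a :: 'k::idom poly)"
  by (simp add: coeff_emb_alt cemb_minus)

lemma coeff_emb_1: "coeff_emb (1 :: 'k::idom poly) = 1"
  by (simp add: coeff_emb_alt cemb_1 One_fract_def)

lemma coeff_emb_monom: "coeff_emb (monom (1 :: 'k::idom) k) = Qv ^ k"
proof (induction k)
  case 0 then show ?case using coeff_emb_1 by (simp add: monom_0 one_pCons)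
next
  case (Suc k)
  have "monom (1::'k) (Suc k) = monom 1 k * [:0,1:]"
    by (simp add: monom_altdef)
  moreover have "coeff_emb ([:0,1:] :: 'k poly) = Qv"
    by (simp add: coeff_emb_alt cemb_def Qv_def map_poly_pCons one_pCons)
  ultimately show ?case using Suc coeff_emb_mult[of "monom 1 k" "[:0,1:]"] by (metis mult.commute power_Suc)
qed

section \<open>Abelianized exponents\<close>

declare plus_fun_apply[simp del] zero_fun_apply[simp del]

type_synonym exv = "mvar \<Rightarrow> nat \<Rightarrow> int"

definition exl :: "letter \<Rightarrow> exv" where
  "exl l = (case l of (s, k, b) \<Rightarrow> (\<lambda>s' k'. if s' = s \<and> k' = k then (if b then 1 else -1) else 0))"

definition ex :: "word \<Rightarrow> exv" where
  "ex w = sum_list (map exl w)"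

lemma ex_Nil [simp]: "ex [] = 0" by (simp add: ex_def)
lemma ex_Cons [simp]: "ex (a # w) = exl a + ex w" by (simp add: ex_def)
lemma ex_append [simp]: "ex (u @ w) = ex u + ex w" by (simp add: ex_def)

lemma ex_sort_key [simp]: "ex (sort_key f w) = ex w"
  unfolding ex_def by (metis mset_map mset_sort sum_mset_sum_list)

lemma ex_AIO [simp]: "ex (AIO w) = ex w"
  by (simp add: AIO_def)

definition exsh :: "exv \<Rightarrow> exv" where
  "exsh e = (\<lambda>s k. if k = 0 then 0 else e s (k - 1))"

lemma exsh_add: "exsh (a + b) = exsh a + exsh b"
  by (auto simp: exsh_def fun_eq_iff plus_fun_apply zero_fun_apply)

lemma exsh_0: "exsh 0 = 0"
  by (auto simp: exsh_def fun_eq_iff plus_fun_apply zero_fun_apply)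

lemma exl_up: "exl (up_letter l) = exsh (exl l)"
  by (cases l) (auto simp: exl_def exsh_def up_letter_def fun_eq_iff)

lemma ex_up_word: "ex (up_word w) = exsh (ex w)"
  by (induction w) (simp_all add: up_word_def exsh_0 exsh_add exl_up)

lemma up_word_append: "up_word (u @ w) = up_word u @ up_word w"
  by (simp add: up_word_def)

definition sm :: "'k::idom elem \<Rightarrow> (exv \<Rightarrow> 'k ratfun) \<Rightarrow> 'k ratfun" where
  "sm f H = sum_list (map (\<lambda>(c, w). coeff_emb c * H (ex w)) f)"

definition eqv :: "'k::idom elem \<Rightarrow> 'k elem \<Rightarrow> bool" where
  "eqv f g \<longleftrightarrow> (\<forall>H. sm f H = sm g H)"

lemma sm_Nil [simp]: "sm [] H = 0" by (simp add: sm_def)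
lemma sm_Cons [simp]: "sm ((c, w) # f) H = coeff_emb c * H (ex w) + sm f H" by (simp add: sm_def)
lemma sm_append [simp]: "sm (f @ g) H = sm f H + sm g H" by (simp add: sm_def)

lemma sm_map_prefix: "sm (map (\<lambda>(c, w). (c, u @ w)) f) H = sm f (\<lambda>e. H (ex u + e))"
  by (induction f) auto

lemma sm_map_cons: "sm (map (\<lambda>(c, w). (c, a # w)) f) H = sm f (\<lambda>e. H (exl a + e))"
  by (induction f) auto

lemma sm_map_suffix: "sm (map (\<lambda>(c, w). (c, w @ v)) f) H = sm f (\<lambda>e. H (e + ex v))"
  by (induction f) auto

lemma sm_map_rho: "(\<And>w. ex (\<rho> w) = ex w) \<Longrightarrow> sm (map (\<lambda>(c, w). (c, \<rho> w)) f) H = sm f H"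
  by (induction f) auto

lemma sm_map_coeff: "sm (map (\<lambda>(c', w'). (c * c', w')) f) H = coeff_emb c * sm f H"
  by (induction f) (auto simp: coeff_emb_mult algebra_simps)

lemma sm_add_H: "sm f (\<lambda>e. A e + B e) = sm f A + sm f B"
  by (induction f) (auto simp: algebra_simps)

lemma sm_cmult_H: "sm f (\<lambda>e. a * A e) = a * sm f A"
  by (induction f) (auto simp: algebra_simps)

lemma sm_diff_H: "sm f (\<lambda>e. A e - B e) = sm f A - sm f B"
  by (induction f) (auto simp: algebra_simps)

lemma sm_zero_H: "sm f (\<lambda>e. 0) = 0"
  by (induction f) auto

lemma sm_qder: "sm (qder R \<rho> f) H = sum_list (map (\<lambda>(c, w). coeff_emb c * sm (qder_word R \<rho> w) H) f)"
  by (induction f) (auto simp: qder_def sm_map_coeff)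

lemma qder_word_Nil [simp]: "qder_word R \<rho> [] = []"
  by (simp add: qder_word_def)

lemma qder_word_rho: "qder_word R \<rho> ws = map (\<lambda>(c, w). (c, \<rho> w)) (qder_word R (\<lambda>w. w) ws)"
  by (simp add: qder_word_def map_concat comp_def case_prod_unfold)

lemma qder_word_Cons_id:
  "qder_word R (\<lambda>w. w) (a # ws) = map (\<lambda>(c, w). (c, w @ up_word ws)) (rule_ext R a)
     @ map (\<lambda>(c, w). (c, a # w)) (qder_word R (\<lambda>w. w) ws)"
proof -
  have u: "[0..<length (a # ws)] = 0 # map Suc [0..<length ws]"
    by (simp add: upt_conv_Cons map_Suc_upt del: upt_Suc)
  show ?thesis
    unfolding qder_word_def u
    by (simp add: map_concat comp_def case_prod_unfold)
qed

lemma sm_dr_Cons: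
  "sm (qder_word R (\<lambda>w. w) (a # ws)) H = sm (rule_ext R a) (\<lambda>e. H (e + ex (up_word ws)))
     + sm (qder_word R (\<lambda>w. w) ws) (\<lambda>e. H (exl a + e))"
  by (simp add: qder_word_Cons_id sm_map_suffix sm_map_cons)

lemma sm_dr_append:
  "sm (qder_word R (\<lambda>w. w) (u @ ws)) H = sm (qder_word R (\<lambda>w. w) u) (\<lambda>e. H (e + ex (up_word ws)))
     + sm (qder_word R (\<lambda>w. w) ws) (\<lambda>e. H (ex u + e))"
proof (induction u arbitrary: H)
  case Nil then show ?case by simp
next
  case (Cons a u)
  show ?case
    by (simp add: sm_dr_Cons Cons.IH up_word_append add.assoc)
qed

lemma sm_qder_AIO: "sm (qder_word R AIO w) H = sm (qder_word R (\<lambda>w. w) w) H"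
  by (subst qder_word_rho) (simp add: sm_map_rho)

section \<open>Invariance of the derivative\<close>

lemma exl_cancel: "exl (s, k, b) + (exl (s, k, \<not> b) + E) = E"
  by (auto simp: exl_def fun_eq_iff plus_fun_apply)

lemma sm_dr_cancel:
  "sm (qder_word (R_inv :: 'k::idom rule) (\<lambda>w. w) ((s, k, b) # (s, k, \<not> b) # r)) H
     = sm (qder_word R_inv (\<lambda>w. w) r) H"
proof -
  have A: "ex (up_word ((s, k, \<not> b) # r)) = exl (s, Suc k, \<not> b) + ex (up_word r)"
    by (simp add: up_word_def up_letter_def)
  show ?thesis
    apply (simp add: sm_dr_Cons A exl_cancel)
    apply (cases b)
    apply (simp_all add: R_inv_def coeff_emb_minus)
    apply (intro disjI2 arg_cong[where f=H]; auto simp: exl_def fun_eq_iff plus_fun_apply)+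
    done
qed

abbreviation DRW :: "word \<Rightarrow> 'k::idom elem" where
  "DRW w \<equiv> qder_word R_inv (\<lambda>w. w) w"

lemma sm_dr_cons_cong:
  assumes "ex w = ex w'" "\<And>H. sm (DRW w) H = sm (DRW w') (H :: exv \<Rightarrow> 'k::idom ratfun)"
  shows "sm (DRW (a # w)) H = sm (DRW (a # w')) (H :: exv \<Rightarrow> 'k ratfun)"
  using assms by (simp add: sm_dr_Cons ex_up_word)

definition cn :: "mvar \<Rightarrow> nat \<Rightarrow> int \<Rightarrow> word" where
  "cn s k n = (if 0 \<le> n then replicate (nat n) (s, k, True) else replicate (nat (- n)) (s, k, False))"

lemma cn_0: "cn s k 0 = []" by (simp add: cn_def)

lemma cn_pos: "0 \<le> n \<Longrightarrow> cn s k (n + 1) = (s, k, True) # cn s k n"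
  by (simp add: cn_def nat_add_distrib)

lemma cn_neg: "n < 0 \<Longrightarrow> cn s k n = (s, k, False) # cn s k (n + 1)"
proof -
  assume "n < 0"
  then have "nat (- n) = Suc (nat (- (n + 1)))" by simp
  then show ?thesis using \<open>n < 0\<close> by (simp add: cn_def)
qed

lemma cn_neg2: "n \<le> 0 \<Longrightarrow> cn s k (n - 1) = (s, k, False) # cn s k n"
  using cn_neg[of "n - 1" s k] by simp

lemma cn_pos2: "0 < n \<Longrightarrow> cn s k n = (s, k, True) # cn s k (n - 1)"
  using cn_pos[of "n - 1" s k] by simp

lemma exl_self: "exl (s, k, b) s k = (if b then 1 else -1)"
  by (simp add: exl_def)

lemma group_nf:
  assumes "\<forall>l\<in>set g. \<exists>b. l = (s, k, b)"
  shows "ex g = ex (cn s k (ex g s k)) \<and>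
         (\<forall>H. sm (DRW g) H = sm (DRW (cn s k (ex g s k))) (H :: exv \<Rightarrow> 'k::idom ratfun))"
  using assms
proof (induction g)
  case Nil
  then show ?case by (simp add: cn_0 zero_fun_apply)
next
  case (Cons a g)
  then obtain b where a: "a = (s, k, b)" by auto
  from Cons have IH: "ex g = ex (cn s k (ex g s k))"
      "\<And>H. sm (DRW g) H = sm (DRW (cn s k (ex g s k))) (H :: exv \<Rightarrow> 'k ratfun)" by auto
  define n where "n = ex g s k"
  have exa: "ex (a # g) s k = (if b then n + 1 else n - 1)"
    by (simp add: a n_def plus_fun_apply exl_self)
  have step1: "sm (DRW (a # g)) H = sm (DRW (a # cn s k n)) (H :: exv \<Rightarrow> 'k ratfun)" for H
    by (rule sm_dr_cons_cong) (use IH in \<open>simp_all add: n_def\<close>)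
  have ex1: "ex (a # g) = ex (a # cn s k n)"
    using IH by (simp add: n_def)
  show ?case
  proof (cases b)
    case True
    show ?thesis
    proof (cases "0 \<le> n")
      case True
      then show ?thesis using step1 ex1 exa \<open>b\<close> by (simp add: a cn_pos)
    next
      case False
      then have c: "cn s k n = (s, k, False) # cn s k (n + 1)" by (simp add: cn_neg)
      have "sm (DRW (a # cn s k n)) H = sm (DRW (cn s k (n + 1))) (H :: exv \<Rightarrow> 'k ratfun)" for H
        using sm_dr_cancel[of s k True "cn s k (n + 1)" H] by (simp add: a c \<open>b\<close>)
      moreover have "ex (a # cn s k n) = ex (cn s k (n + 1))"
        using exl_cancel[of s k True] by (simp add: a c \<open>b\<close>)
      ultimately show ?thesis using step1 ex1 exa \<open>b\<close> by simp
    qed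
  next
    case False
    show ?thesis
    proof (cases "0 < n")
      case True
      then have c: "cn s k n = (s, k, True) # cn s k (n - 1)" by (simp add: cn_pos2)
      have "sm (DRW (a # cn s k n)) H = sm (DRW (cn s k (n - 1))) (H :: exv \<Rightarrow> 'k ratfun)" for H
        using sm_dr_cancel[of s k False "cn s k (n - 1)" H] by (simp add: a c \<open>\<not> b\<close>)
      moreover have "ex (a # cn s k n) = ex (cn s k (n - 1))"
        using exl_cancel[of s k False] by (simp add: a c \<open>\<not> b\<close>)
      ultimately show ?thesis using step1 ex1 exa \<open>\<not> b\<close> by simp
    next
      case False
      then show ?thesis using step1 ex1 exa \<open>\<not> b\<close> by (simp add: a cn_neg2)
    qed
  qed
qed

lemma split_sorted:
  fixes f :: "'a \<Rightarrow> nat"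
  assumes "sorted (map f w)" "\<forall>l\<in>set w. \<kappa> \<le> f l"
  shows "filter (\<lambda>l. f l = \<kappa>) w @ filter (\<lambda>l. f l \<noteq> \<kappa>) w = w"
  using assms
proof (induction w)
  case Nil then show ?case by simp
next
  case (Cons a w)
  show ?case
  proof (cases "f a = \<kappa>")
    case True
    then show ?thesis using Cons by simp
  next
    case False
    with Cons.prems have "\<forall>l\<in>set w. \<kappa> < f l" by fastforce
    then have "filter (\<lambda>l. f l = \<kappa>) w = []" "filter (\<lambda>l. f l \<noteq> \<kappa>) w = w"
      by (auto simp: filter_empty_conv intro!: filter_True)
    then show ?thesis using False by simp
  qed
qed

lemma aio_key_simp: "aio_key (s, k, b) = 2 * k + (case s of VX \<Rightarrow> 0 | VY \<Rightarrow> 1)"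
  by (simp add: aio_key_def)

lemma ex_filter_key:
  "ex (filter (\<lambda>l. aio_key l = \<kappa>) w) = (\<lambda>s k. if aio_key (s, k, True) = \<kappa> then ex w s k else 0)"
  by (induction w) (auto simp: fun_eq_iff plus_fun_apply zero_fun_apply exl_def aio_key_simp)

lemma ex_filter_nkey:
  "ex (filter (\<lambda>l. aio_key l \<noteq> \<kappa>) w) = (\<lambda>s k. if aio_key (s, k, True) = \<kappa> then 0 else ex w s k)"
  by (induction w) (auto simp: fun_eq_iff plus_fun_apply zero_fun_apply exl_def aio_key_simp)

lemma key_inj: "aio_key (s, k, b) = \<kappa> \<Longrightarrow> s = (if even \<kappa> then VX else VY) \<and> k = \<kappa> div 2"
  by (cases s) (auto simp: aio_key_simp)

lemma group_eq:
  assumes "\<forall>l\<in>set g1. aio_key l = \<kappa>" "\<forall>l\<in>set g2. aio_key l = \<kappa>" "ex g1 = ex g2"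
  shows "sm (DRW g1) H = sm (DRW g2) (H :: exv \<Rightarrow> 'k::idom ratfun)"
proof -
  define s where "s = (if even \<kappa> then VX else VY)"
  define k where "k = \<kappa> div 2"
  have "\<forall>l\<in>set g1. \<exists>b. l = (s, k, b)" "\<forall>l\<in>set g2. \<exists>b. l = (s, k, b)"
    using assms(1,2) key_inj unfolding s_def k_def by fastforce+
  from group_nf[OF this(1)] group_nf[OF this(2)] assms(3) show ?thesis by metis
qed

lemma dr_sorted_inv:
  assumes "sorted (map aio_key w1)" "sorted (map aio_key w2)" "ex w1 = ex w2"
  shows "sm (DRW w1) H = sm (DRW w2) (H :: exv \<Rightarrow> 'k::idom ratfun)"
  using assms
proof (induction "length w1 + length w2" arbitrary: w1 w2 H rule: less_induct)
  case less
  show ?case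
  proof (cases "w1 @ w2 = []")
    case True then show ?thesis by simp
  next
    case False
    define \<kappa> where "\<kappa> = Min (aio_key ` set (w1 @ w2))"
    have kin: "\<kappa> \<in> aio_key ` set (w1 @ w2)"
      unfolding \<kappa>_def using False by (intro Min_in) auto
    have kle: "\<forall>l\<in>set (w1 @ w2). \<kappa> \<le> aio_key l"
      unfolding \<kappa>_def by auto
    define g1 where "g1 = filter (\<lambda>l. aio_key l = \<kappa>) w1"
    define r1 where "r1 = filter (\<lambda>l. aio_key l \<noteq> \<kappa>) w1"
    define g2 where "g2 = filter (\<lambda>l. aio_key l = \<kappa>) w2"
    define r2 where "r2 = filter (\<lambda>l. aio_key l \<noteq> \<kappa>) w2"
    have w1: "w1 = g1 @ r1" unfolding g1_def r1_def
      using split_sorted[of aio_key w1 \<kappa>] less.prems kle by simp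
    have w2: "w2 = g2 @ r2" unfolding g2_def r2_def
      using split_sorted[of aio_key w2 \<kappa>] less.prems kle by simp
    have exg: "ex g1 = ex g2" unfolding g1_def g2_def ex_filter_key by (simp only: less.prems(3))
    have exr: "ex r1 = ex r2" unfolding r1_def r2_def ex_filter_nkey by (simp only: less.prems(3))
    have len: "length r1 + length r2 < length w1 + length w2"
    proof -
      have "length r1 \<le> length w1" "length r2 \<le> length w2" unfolding r1_def r2_def by auto
      moreover have "length r1 < length w1 \<or> length r2 < length w2"
        using kin unfolding r1_def r2_def by (auto intro: length_filter_less)
      ultimately show ?thesis by linarith
    qed
    have sr: "sorted (map aio_key r1)" "sorted (map aio_key r2)"
      unfolding r1_def r2_def using less.prems by (auto intro: sorted_filter)
    have IH: "sm (DRW r1) H' = sm (DRW r2) (H' :: exv \<Rightarrow> 'k ratfun)" for H'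
      using less.hyps[OF len sr exr] .
    have G: "sm (DRW g1) H' = sm (DRW g2) (H' :: exv \<Rightarrow> 'k ratfun)" for H'
      using exg by (intro group_eq[where \<kappa> = \<kappa>]) (auto simp: g1_def g2_def)
    show ?thesis
      unfolding w1 w2 sm_dr_append using G IH exg exr by (simp add: ex_up_word)
  qed
qed

definition sortedE :: "'k elem \<Rightarrow> bool" where
  "sortedE f \<longleftrightarrow> (\<forall>(c, w)\<in>set f. sorted (map aio_key w))"

lemma sm_qder_AIO_id: "sm (qder R AIO f) H = sm (qder R (\<lambda>w. w) f) H"
  by (simp add: sm_qder sm_qder_AIO)

lemma qder_cong:
  assumes "sortedE f" "sortedE g" "eqv f g"
  shows "eqv (qder (R_inv :: 'k::idom rule) AIO f) (qder R_inv AIO g)"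
  unfolding eqv_def
proof
  fix H :: "exv \<Rightarrow> 'k ratfun"
  define K where "K = (\<lambda>e. sm (DRW (SOME w. sorted (map aio_key w) \<and> ex w = e)) H)"
  have K: "sm (DRW w) H = K (ex w)" if "sorted (map aio_key w)" for w
  proof -
    have "\<exists>w'. sorted (map aio_key w') \<and> ex w' = ex w" using that by blast
    then have "sorted (map aio_key (SOME w'. sorted (map aio_key w') \<and> ex w' = ex w)) \<and>
               ex (SOME w'. sorted (map aio_key w') \<and> ex w' = ex w) = ex w"
      by (rule someI_ex)
    then have s0: "sorted (map aio_key (SOME w'. sorted (map aio_key w') \<and> ex w' = ex w))"
      and e0: "ex (SOME w'. sorted (map aio_key w') \<and> ex w' = ex w) = ex w" by auto
    show ?thesis unfolding K_def by (rule dr_sorted_inv[OF that s0 e0[symmetric]])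
  qed
  have E: "sm (qder R_inv AIO h) H = sm h K" if "sortedE h" for h :: "'k elem"
  proof -
    have "sm (qder R_inv AIO h) H = sum_list (map (\<lambda>(c, w). coeff_emb c * sm (DRW w) H) h)"
      by (simp add: sm_qder sm_qder_AIO)
    also have "\<dots> = sum_list (map (\<lambda>(c, w). coeff_emb c * K (ex w)) h)"
      using that unfolding sortedE_def by (intro arg_cong[where f=sum_list] map_cong) (auto simp: K)
    finally show ?thesis by (simp add: sm_def)
  qed
  show "sm (qder R_inv AIO f) H = sm (qder R_inv AIO g) H"
    using E[OF assms(1)] E[OF assms(2)] assms(3) unfolding eqv_def by simp
qed

lemma sortedE_qder: "sortedE (qder R AIO f)"
  unfolding sortedE_def qder_def qder_word_rho[of R AIO] AIO_def
  by (auto split: prod.splits)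

lemma qder_pow_Suc: "qder_pow R \<rho> (Suc n) f = qder R \<rho> (qder_pow R \<rho> n f)"
  by (simp add: qder_pow_def)

lemma qder_pow_0: "qder_pow R \<rho> 0 f = f"
  by (simp add: qder_pow_def)

section \<open>Products and Leibniz rule\<close>

definition mulE :: "'k::idom elem \<Rightarrow> 'k elem \<Rightarrow> 'k elem" where
  "mulE f g = concat (map (\<lambda>(c, w). map (\<lambda>(d, v). (c * d, w @ v)) g) f)"

definition upE :: "'k elem \<Rightarrow> 'k elem" where
  "upE f = map (\<lambda>(c, w). (c, up_word w)) f"

lemma mulE_Nil [simp]: "mulE [] g = []" by (simp add: mulE_def)
lemma mulE_Cons [simp]: "mulE ((c, w) # f) g = map (\<lambda>(d, v). (c * d, w @ v)) g @ mulE f g"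
  by (simp add: mulE_def)

lemma sm_mulE1: "sm (map (\<lambda>(d, v). (c * d, w @ v)) g) H = coeff_emb c * sm g (\<lambda>e'. H (ex w + e'))"
  by (induction g) (auto simp: coeff_emb_mult algebra_simps)

lemma sm_mulE: "sm (mulE f g) H = sm f (\<lambda>e. sm g (\<lambda>e'. H (e + e')))"
  by (induction f) (auto simp: sm_mulE1)

lemma upE_Cons [simp]: "upE ((c, w) # f) = (c, up_word w) # upE f" by (simp add: upE_def)
lemma upE_Nil [simp]: "upE [] = []" by (simp add: upE_def)

lemma upE_mulE: "upE (mulE f g) = mulE (upE f) (upE g)"
  by (induction f) (auto simp: upE_def up_word_append comp_def case_prod_unfold)

lemma sm_qder_Nil [simp]: "sm (qder R \<rho> []) H = 0" by (simp add: qder_def)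

lemma sm_qder_Cons: "sm (qder R \<rho> ((c, w) # f)) H = coeff_emb c * sm (qder_word R \<rho> w) H + sm (qder R \<rho> f) H"
  by (simp add: sm_qder)

lemma sm_qder_append: "sm (qder R \<rho> (f @ g)) H = sm (qder R \<rho> f) H + sm (qder R \<rho> g) H"
  by (simp add: sm_qder)

lemma leib1:
  "sm (qder R (\<lambda>w. w) (map (\<lambda>(d, v). (c * d, w @ v)) g)) H
   = coeff_emb c * sm (qder_word R (\<lambda>w. w) w) (\<lambda>e. sm (upE g) (\<lambda>e'. H (e + e')))
     + coeff_emb c * sm (qder R (\<lambda>w. w) g) (\<lambda>e'. H (ex w + e'))"
proof (induction g)
  case Nil
  then show ?case by (simp add: sm_zero_H)
next
  case (Cons x g)
  obtain d v where x: "x = (d, v)" by (cases x)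
  show ?case
    apply (simp add: x sm_qder_Cons Cons.IH sm_dr_append sm_add_H sm_cmult_H coeff_emb_mult)
    apply (simp add: algebra_simps)
    done
qed

lemma leibniz:
  "sm (qder R (\<lambda>w. w) (mulE f g)) H
   = sm (qder R (\<lambda>w. w) f) (\<lambda>e. sm (upE g) (\<lambda>e'. H (e + e')))
     + sm f (\<lambda>e. sm (qder R (\<lambda>w. w) g) (\<lambda>e'. H (e + e')))"
proof (induction f)
  case Nil
  then show ?case by simp
next
  case (Cons x f)
  obtain c w where x: "x = (c, w)" by (cases x)
  show ?case
    by (simp add: x sm_qder_append leib1 Cons.IH sm_qder_Cons)
qed

definition FY :: "nat \<Rightarrow> 'k::idom elem" where
  "FY j = [(1, [(VY, j, True)]), (-1, [(VX, j, True)])]"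

definition FX :: "nat \<Rightarrow> 'k::idom elem" where
  "FX j = [(1, [(VX, j, True)]), (-1, [(VY, j, True)])]"

fun Pel :: "nat \<Rightarrow> nat \<Rightarrow> 'k::idom elem" where
  "Pel 0 j = [(1, [])]"
| "Pel (Suc m) j = mulE (FY j) (Pel m (Suc j))"

fun Qel :: "nat \<Rightarrow> nat \<Rightarrow> 'k::idom elem" where
  "Qel 0 j = [(1, [])]"
| "Qel (Suc m) j = mulE (Qel m j) (FX (j + m))"

lemma dr_single: "sm (DRW [a]) H = sm (rule_ext R_inv a) (\<lambda>e. H (e + 0))"
  by (simp add: sm_dr_Cons up_word_def)

lemma DR_FY: "sm (qder R_inv (\<lambda>w. w) (FY j)) H = (0 :: 'k::idom ratfun)"
  by (simp add: FY_def sm_qder_Cons dr_single R_inv_def coeff_emb_minus coeff_emb_1)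

lemma DR_FX: "sm (qder R_inv (\<lambda>w. w) (FX j)) H = (0 :: 'k::idom ratfun)"
  by (simp add: FX_def sm_qder_Cons dr_single R_inv_def coeff_emb_minus coeff_emb_1)

lemma DR_Pel: "sm (qder R_inv (\<lambda>w. w) (Pel m j)) H = (0 :: 'k::idom ratfun)"
proof (induction m arbitrary: j H)
  case 0 then show ?case by (simp add: sm_qder_Cons)
next
  case (Suc m) then show ?case by (simp add: leibniz DR_FY sm_zero_H)
qed

lemma DR_Qel: "sm (qder R_inv (\<lambda>w. w) (Qel m j)) H = (0 :: 'k::idom ratfun)"
proof (induction m arbitrary: j H)
  case 0 then show ?case by (simp add: sm_qder_Cons)
next
  case (Suc m) then show ?case by (simp add: leibniz DR_FX sm_zero_H)
qed

lemma upE_FY: "upE (FY j) = FY (Suc j)"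
  by (simp add: FY_def up_word_def up_letter_def)

lemma upE_Pel: "upE (Pel m j) = Pel m (Suc j)"
  by (induction m arbitrary: j) (simp_all only: Pel.simps upE_mulE upE_FY, simp add: up_word_def)

lemma set_mulE: "(c, w) \<in> set (mulE f g) \<Longrightarrow>
    \<exists>c1 w1 c2 w2. (c1, w1) \<in> set f \<and> (c2, w2) \<in> set g \<and> w = w1 @ w2"
  by (auto simp: mulE_def)

lemma Pel_sorted: "(c, w) \<in> set (Pel m j :: 'k::idom elem) \<Longrightarrow> sorted (map aio_key w) \<and> (\<forall>l\<in>set w. 2 * j \<le> aio_key l)"
proof (induction m arbitrary: j c w)
  case 0 then show ?case by simp
next
  case (Suc m)
  obtain c1 w1 c2 w2 where h: "(c1, w1) \<in> set (FY j :: 'k elem)" "(c2, w2) \<in> set (Pel m (Suc j) :: 'k elem)" "w = w1 @ w2"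
    using set_mulE[OF Suc.prems[unfolded Pel.simps]] by blast
  from Suc.IH[OF h(2)] have IH: "sorted (map aio_key w2)" "\<forall>l\<in>set w2. 2 * Suc j \<le> aio_key l" by auto
  from h(1) have "w1 = [(VY, j, True)] \<or> w1 = [(VX, j, True)]" by (auto simp: FY_def)
  moreover have "aio_key (VY, j, True) = 2 * j + 1" "aio_key (VX, j, True) = 2 * j"
    by (simp_all add: aio_key_simp)
  ultimately show ?case using IH h(3) by (auto; fastforce)
qed

lemma Qel_sorted: "(c, w) \<in> set (Qel m j :: 'k::idom elem) \<Longrightarrow> sorted (map aio_key w) \<and>
     (\<forall>l\<in>set w. 2 * j \<le> aio_key l \<and> aio_key l < 2 * (j + m))"
proof (induction m arbitrary: c w)
  case 0 then show ?case by simp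
next
  case (Suc m)
  obtain c1 w1 c2 w2 where h: "(c1, w1) \<in> set (Qel m j :: 'k elem)" "(c2, w2) \<in> set (FX (j + m) :: 'k elem)" "w = w1 @ w2"
    using set_mulE[OF Suc.prems[unfolded Qel.simps]] by blast
  from Suc.IH[OF h(1)] have IH: "sorted (map aio_key w1)" "\<forall>l\<in>set w1. 2 * j \<le> aio_key l \<and> aio_key l < 2 * (j + m)" by auto
  from h(2) have "w2 = [(VX, j + m, True)] \<or> w2 = [(VY, j + m, True)]" by (auto simp: FX_def)
  then show ?case using IH h(3) by (auto simp: aio_key_simp sorted_append)
qed

lemma exl_cancelT: "exl (s, k, True) + (exl (s, k, False) + E) = E"
  using exl_cancel[of s k True] by simp

lemma exl_cancelF: "exl (s, k, False) + (exl (s, k, True) + E) = E"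
  using exl_cancel[of s k False] by simp

lemma exl_cancelT0: "exl (s, k, True) + exl (s, k, False) = 0"
  using exl_cancel[of s k True 0] by simp

lemma exl_cancelF0: "exl (s, k, False) + exl (s, k, True) = 0"
  using exl_cancel[of s k False 0] by simp

section \<open>The x case\<close>

definition cX :: "nat \<Rightarrow> nat \<Rightarrow> 'k::idom poly" where
  "cX i n = (-1) ^ n * monom 1 (i * n)"

definition TX :: "nat \<Rightarrow> nat \<Rightarrow> 'k::idom elem" where
  "TX i m = mulE [(cX i (Suc m), [(VX, i, False), (VY, i, True)])] (Pel m (Suc i))"

lemma TX_sorted: "sortedE (TX i m :: 'k::idom elem)"
  unfolding sortedE_def
proof (clarify)
  fix c w assume "(c, w) \<in> set (TX i m :: 'k elem)"
  then obtain c2 w2 where h: "(c2, w2) \<in> set (Pel m (Suc i) :: 'k elem)"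
      "w = [(VX, i, False), (VY, i, True)] @ w2"
    unfolding TX_def by (auto simp: mulE_def)
  from Pel_sorted[OF h(1)] h(2) show "sorted (map aio_key w)"
    by (auto simp: aio_key_simp)
qed

lemma X_step0: "eqv (qder R_inv AIO [(1, [(VX, i, False)])]) (TX i 0 :: 'k::idom elem)"
  unfolding eqv_def
proof
  fix H :: "exv \<Rightarrow> 'k ratfun"
  show "sm (qder R_inv AIO [(1, [(VX, i, False)])]) H = sm (TX i 0) H"
    apply (simp add: sm_qder_AIO_id sm_qder_AIO sm_qder_Cons dr_single TX_def cX_def R_inv_def coeff_emb_1)
    apply (intro disjI2 arg_cong[where f=H]; auto simp: exl_def fun_eq_iff plus_fun_apply)
    done
qed

lemma cX_Suc: "cX i (Suc n) = - (cX i n * monom 1 i)"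
  by (simp add: cX_def mult_monom algebra_simps)

lemma aX1: "exl (VX, i, False) + (exl (VY, i, True) + (exl (VX, Suc i, True) + exl (VX, Suc i, False))) + exl (VY, Suc i, True) + e = exl (VX, i, False) + exl (VY, i, True) + (exl (VY, Suc i, True) + e)"
  by (auto simp: fun_eq_iff plus_fun_apply exl_def)

lemma aX2: "exl (VX, i, False) + (exl (VY, i, True) + exl (VX, Suc i, True)) + e = exl (VX, i, False) + exl (VY, i, True) + (exl (VX, Suc i, True) + e)"
  by (simp add: add.assoc)

lemma X_step: "eqv (qder R_inv AIO (TX i m)) (TX i (Suc m) :: 'k::idom elem)"
  unfolding eqv_def
proof
  fix H :: "exv \<Rightarrow> 'k ratfun"
  show "sm (qder R_inv AIO (TX i m)) H = sm (TX i (Suc m)) H"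
    unfolding sm_qder_AIO_id TX_def
    apply (simp only: leibniz upE_Pel DR_Pel sm_zero_H Pel.simps sm_mulE)
    apply (simp add: sm_qder_Cons sm_dr_Cons R_inv_def up_word_def up_letter_def FY_def)
    apply (simp only: aX1 aX2 cX_Suc[of i "Suc m"] coeff_emb_mult coeff_emb_minus coeff_emb_1)
    apply (simp add: algebra_simps)
    done
qed

section \<open>The y case\<close>

definition cY :: "nat \<Rightarrow> nat \<Rightarrow> 'k::idom poly" where
  "cY i n = (-1) ^ n * monom 1 (i * n + (n choose 2))"

definition TY :: "nat \<Rightarrow> nat \<Rightarrow> 'k::idom elem" where
  "TY i m = mulE (Qel m (Suc i)) [(cY i (Suc m), [(VX, Suc i + m, True), (VY, Suc i + m, False)])]"

lemma TY_sorted: "sortedE (TY i m :: 'k::idom elem)"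
  unfolding sortedE_def
proof (clarify)
  fix c w assume "(c, w) \<in> set (TY i m :: 'k elem)"
  then obtain c1 w1 where h: "(c1, w1) \<in> set (Qel m (Suc i) :: 'k elem)"
      "w = w1 @ [(VX, Suc i + m, True), (VY, Suc i + m, False)]"
    unfolding TY_def by (auto simp: mulE_def)
  from Qel_sorted[OF h(1)] h(2) show "sorted (map aio_key w)"
    by (auto simp: aio_key_simp sorted_append)
qed

lemma Y_step0: "eqv (qder R_inv AIO [(1, [(VY, i, False)])]) (TY i 0 :: 'k::idom elem)"
  unfolding eqv_def
proof
  fix H :: "exv \<Rightarrow> 'k ratfun"
  show "sm (qder R_inv AIO [(1, [(VY, i, False)])]) H = sm (TY i 0) H"
    by (simp add: sm_qder_AIO_id sm_qder_AIO sm_qder_Cons dr_single TY_def cY_def R_inv_def coeff_emb_1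
        add.assoc exl_cancelT exl_cancelF numeral_2_eq_2)
qed

lemma choose2_Suc: "(Suc n choose 2) = n + (n choose 2)"
  by (simp add: numeral_2_eq_2)

lemma cY_Suc: "cY i (Suc n) = - (cY i n * monom 1 (i + n))"
  by (simp add: cY_def mult_monom algebra_simps choose2_Suc)

lemma Y_step: "eqv (qder R_inv AIO (TY i m)) (TY i (Suc m) :: 'k::idom elem)"
  unfolding eqv_def
proof
  fix H :: "exv \<Rightarrow> 'k ratfun"
  show "sm (qder R_inv AIO (TY i m)) H = sm (TY i (Suc m)) H"
    unfolding sm_qder_AIO_id TY_def
    apply (simp only: leibniz DR_Qel sm_zero_H Qel.simps sm_mulE add_0_left)
    apply (rule arg_cong[where f="sm (Qel m (Suc i))"])
    apply (rule ext)
    apply (simp add: sm_qder_Cons sm_dr_Cons R_inv_def up_word_def up_letter_def FX_def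
        add.assoc exl_cancelT exl_cancelF)
    apply (simp only: cY_Suc[of i "Suc m"] coeff_emb_mult coeff_emb_minus coeff_emb_1)
    apply (simp add: algebra_simps)
    done
qed

lemma eqv_trans: "eqv f g \<Longrightarrow> eqv g h \<Longrightarrow> eqv f h"
  by (simp add: eqv_def)

lemma X_inv: "eqv (qder_pow R_inv AIO (Suc m) [(1, [(VX, i, False)])]) (TX i m :: 'k::idom elem)"
proof (induction m)
  case 0 then show ?case by (simp add: qder_pow_Suc qder_pow_0 X_step0)
next
  case (Suc m)
  have "eqv (qder R_inv AIO (qder_pow R_inv AIO (Suc m) [(1, [(VX, i, False)])]))
            (qder R_inv AIO (TX i m :: 'k elem))"
  proof (rule qder_cong)
    show "sortedE (qder_pow R_inv AIO (Suc m) [(1, [(VX, i, False)])])"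
      by (simp only: qder_pow_Suc sortedE_qder)
    show "sortedE (TX i m :: 'k elem)" by (rule TX_sorted)
    show "eqv (qder_pow R_inv AIO (Suc m) [(1, [(VX, i, False)])]) (TX i m :: 'k elem)" by (rule Suc.IH)
  qed
  then have "eqv (qder R_inv AIO (qder_pow R_inv AIO (Suc m) [(1, [(VX, i, False)])])) (TX i (Suc m) :: 'k elem)"
    by (rule eqv_trans) (rule X_step)
  then show ?case by (simp only: qder_pow_Suc[of _ _ "Suc m"])
qed

lemma Y_inv: "eqv (qder_pow R_inv AIO (Suc m) [(1, [(VY, i, False)])]) (TY i m :: 'k::idom elem)"
proof (induction m)
  case 0 then show ?case by (simp add: qder_pow_Suc qder_pow_0 Y_step0)
next
  case (Suc m)
  have "eqv (qder R_inv AIO (qder_pow R_inv AIO (Suc m) [(1, [(VY, i, False)])]))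
            (qder R_inv AIO (TY i m :: 'k elem))"
  proof (rule qder_cong)
    show "sortedE (qder_pow R_inv AIO (Suc m) [(1, [(VY, i, False)])])"
      by (simp only: qder_pow_Suc sortedE_qder)
    show "sortedE (TY i m :: 'k elem)" by (rule TY_sorted)
    show "eqv (qder_pow R_inv AIO (Suc m) [(1, [(VY, i, False)])]) (TY i m :: 'k elem)" by (rule Suc.IH)
  qed
  then have "eqv (qder R_inv AIO (qder_pow R_inv AIO (Suc m) [(1, [(VY, i, False)])])) (TY i (Suc m) :: 'k elem)"
    by (rule eqv_trans) (rule Y_step)
  then show ?case by (simp only: qder_pow_Suc[of _ _ "Suc m"])
qed

lemma Xv_nz: "Xv \<noteq> (0 :: 'k::idom ratfun)"
  by (simp add: Xv_def Zero_fract_def eq_fract)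

lemma Yv_nz: "Yv \<noteq> (0 :: 'k::idom ratfun)"
  by (simp add: Yv_def Zero_fract_def eq_fract)

lemma Xv_Yv: "Xv \<noteq> (Yv :: 'k::idom ratfun)"
  by (simp add: Xv_def Yv_def eq_fract)

definition cnt :: "mvar \<Rightarrow> nat \<Rightarrow> word \<Rightarrow> int" where
  "cnt s N w = (\<Sum>k<N. ex w s k)"

lemma sum_exl: "k < N \<Longrightarrow> (\<Sum>k'<N. exl (s, k, b) s' k') = (if s' = s then (if b then 1 else -1) else 0)"
  by (auto simp: exl_def)

lemma powi_1p: "(v :: 'a::field) \<noteq> 0 \<Longrightarrow> v powi (1 + c) = v * v powi c"
  by (simp add: power_int_add)

lemma powi_m1: "(v :: 'a::field) \<noteq> 0 \<Longrightarrow> v powi (c - 1) = inverse v * v powi c"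
proof -
  assume "v \<noteq> 0"
  have "v powi (c - 1) = v powi (c + (-1))" by simp
  also have "\<dots> = v powi c * v powi (-1)" using \<open>v \<noteq> 0\<close> by (intro power_int_add disjI1)
  also have "\<dots> = v powi c * inverse v" by (simp add: power_int_minus)
  finally show ?thesis by (simp only: mult.commute)
qed

lemma eval_cnt:
  "(\<forall>l\<in>set w. fst (snd l) < N) \<Longrightarrow>
   eval_word (phi_inv :: mvar \<Rightarrow> nat \<Rightarrow> 'k::idom ratfun) w = Xv powi cnt VX N w * Yv powi cnt VY N w"
proof (induction w)
  case Nil then show ?case by (simp add: eval_word_def cnt_def zero_fun_apply)
next
  case (Cons a w)
  obtain s k b where a: "a = (s, k, b)" by (cases a)
  with Cons.prems have k: "k < N" by auto
  have c: "cnt s' N (a # w) = (if s' = s then (if b then 1 else -1) else 0) + cnt s' N w" for s'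
    by (simp add: cnt_def plus_fun_apply sum.distrib a sum_exl[OF k])
  have e: "eval_word phi_inv (a # w) = (if b then phi_inv s k else inverse (phi_inv s k)) * eval_word (phi_inv :: mvar \<Rightarrow> nat \<Rightarrow> 'k ratfun) w"
    by (simp add: eval_word_def a)
  have IH: "eval_word (phi_inv :: mvar \<Rightarrow> nat \<Rightarrow> 'k ratfun) w = Xv powi cnt VX N w * Yv powi cnt VY N w"
    using Cons by auto
  show ?case
    unfolding e c IH
    by (cases s; cases b) (simp_all add: phi_inv_def powi_1p[OF Xv_nz] powi_1p[OF Yv_nz]
        powi_m1[OF Xv_nz] powi_m1[OF Yv_nz] ac_simps)
qed

lemma eval_ex: "ex w1 = ex w2 \<Longrightarrow> eval_word (phi_inv :: mvar \<Rightarrow> nat \<Rightarrow> 'k::idom ratfun) w1 = eval_word phi_inv w2"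
proof -
  assume h: "ex w1 = ex w2"
  define N where "N = Suc (Max (insert 0 (fst ` snd ` set (w1 @ w2))))"
  have "\<forall>l\<in>set (w1 @ w2). fst (snd l) < N"
    unfolding N_def by (auto simp: less_Suc_eq_le)
  then have "\<forall>l\<in>set w1. fst (snd l) < N" "\<forall>l\<in>set w2. fst (snd l) < N" by auto
  from eval_cnt[where 'k='k, OF this(1)] eval_cnt[where 'k='k, OF this(2)] h show ?thesis by (simp add: cnt_def)
qed

definition EV :: "exv \<Rightarrow> 'k::idom ratfun" where
  "EV e = eval_word phi_inv (SOME w. ex w = e)"

lemma EV_ex: "EV (ex w) = eval_word phi_inv w"
proof -
  have "ex (SOME w'. ex w' = ex w) = ex w" by (rule someI_ex) blast
  then show ?thesis unfolding EV_def by (rule eval_ex)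
qed

lemma eval_elem_sm: "eval_elem phi_inv f = sm f EV"
  by (simp add: eval_elem_def sm_def EV_ex)

lemma sm_EV_left: "sm f (\<lambda>e. EV (exl a + e)) = eval_word phi_inv [a] * (sm f EV :: 'k::idom ratfun)"
proof -
  have "EV (exl a + ex w) = eval_word phi_inv [a] * (EV (ex w) :: 'k ratfun)" for w
    using EV_ex[of "a # w"] by (simp add: EV_ex eval_word_def ac_simps)
  then show ?thesis by (induction f) (auto simp: algebra_simps)
qed

lemma sm_EV_right: "sm f (\<lambda>e. EV (e + exl a)) = eval_word phi_inv [a] * (sm f EV :: 'k::idom ratfun)"
proof -
  have "EV (ex w + exl a) = eval_word phi_inv [a] * (EV (ex w) :: 'k ratfun)" for w
    using EV_ex[of "w @ [a]"] by (simp add: EV_ex eval_word_def ac_simps)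
  then show ?thesis by (induction f) (auto simp: algebra_simps)
qed

lemma sm_EV_left2: "sm f (\<lambda>e. EV (exl a + exl b + e)) = eval_word phi_inv [a, b] * (sm f EV :: 'k::idom ratfun)"
proof -
  have "EV (exl a + exl b + ex w) = eval_word phi_inv [a, b] * (EV (ex w) :: 'k ratfun)" for w
    using EV_ex[of "a # b # w"] by (simp add: EV_ex eval_word_def add.assoc ac_simps)
  then show ?thesis by (induction f) (auto simp: algebra_simps)
qed

lemma sm_EV_right2: "sm f (\<lambda>e. EV (e + (exl a + exl b))) = eval_word phi_inv [a, b] * (sm f EV :: 'k::idom ratfun)"
proof -
  have "EV (ex w + (exl a + exl b)) = eval_word phi_inv [a, b] * (EV (ex w) :: 'k ratfun)" for w
    using EV_ex[of "w @ [a, b]"] by (simp add: EV_ex eval_word_def ac_simps)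
  then show ?thesis by (induction f) (auto simp: algebra_simps)
qed

lemma sm_Pel: "sm (Pel m j) EV = (Yv - Xv :: 'k::idom ratfun) ^ m"
proof (induction m arbitrary: j)
  case 0 then show ?case by (simp add: coeff_emb_1 EV_ex[of "[]", simplified] eval_word_def)
next
  case (Suc m)
  show ?case
    by (simp del: mulE_Cons add: sm_mulE FY_def coeff_emb_1 coeff_emb_minus sm_EV_left sm_EV_right Suc.IH eval_word_def
        phi_inv_def algebra_simps)
qed

lemma sm_Qel: "sm (Qel m j) EV = (Xv - Yv :: 'k::idom ratfun) ^ m"
proof (induction m)
  case 0 then show ?case by (simp add: coeff_emb_1 EV_ex[of "[]", simplified] eval_word_def)
next
  case (Suc m)
  show ?case
    by (simp del: mulE_Cons add: sm_mulE FX_def coeff_emb_1 coeff_emb_minus sm_EV_right Suc.IH eval_word_def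
        phi_inv_def sm_add_H sm_diff_H sm_cmult_H algebra_simps)
qed

lemma eval_X: "eval_elem phi_inv (qder_pow R_inv AIO (Suc m) [(1, [(VX, i, False)])])
   = coeff_emb (cX i (Suc m)) * (inverse Xv * Yv) * (Yv - Xv :: 'k::idom ratfun) ^ m"
proof -
  have "eval_elem phi_inv (qder_pow R_inv AIO (Suc m) [(1, [(VX, i, False)])]) = sm (TX i m) (EV :: exv \<Rightarrow> 'k ratfun)"
    using X_inv[where 'k='k, of m i] unfolding eqv_def eval_elem_sm by simp
  also have "\<dots> = coeff_emb (cX i (Suc m)) * (inverse Xv * Yv) * (Yv - Xv) ^ m"
    by (simp del: mulE_Cons add: TX_def sm_mulE sm_EV_left2 sm_Pel eval_word_def phi_inv_def)
  finally show ?thesis .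
qed

lemma eval_Y: "eval_elem phi_inv (qder_pow R_inv AIO (Suc m) [(1, [(VY, i, False)])])
   = coeff_emb (cY i (Suc m)) * (Xv * inverse Yv) * (Xv - Yv :: 'k::idom ratfun) ^ m"
proof -
  have "eval_elem phi_inv (qder_pow R_inv AIO (Suc m) [(1, [(VY, i, False)])]) = sm (TY i m) (EV :: exv \<Rightarrow> 'k ratfun)"
    using Y_inv[where 'k='k, of m i] unfolding eqv_def eval_elem_sm by simp
  also have "\<dots> = coeff_emb (cY i (Suc m)) * (Xv * inverse Yv) * (Xv - Yv) ^ m"
    by (simp del: mulE_Cons add: TY_def sm_mulE sm_EV_right2 sm_Qel eval_word_def phi_inv_def sm_cmult_H algebra_simps)
  finally show ?thesis .
qed

lemma coeff_emb_power: "coeff_emb (a ^ n) = coeff_emb (a :: 'k::idom poly) ^ n"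
  by (induction n) (simp_all add: coeff_emb_1 coeff_emb_mult)

lemma coeff_emb_cX: "coeff_emb (cX i n :: 'k::idom poly) = (-1) ^ n * Qv ^ (i * n)"
  by (simp add: cX_def coeff_emb_mult coeff_emb_monom coeff_emb_minus coeff_emb_1 coeff_emb_power)

lemma coeff_emb_cY: "coeff_emb (cY i n :: 'k::idom poly) = (-1) ^ n * Qv ^ (i * n + (n choose 2))"
  by (simp add: cY_def coeff_emb_mult coeff_emb_monom coeff_emb_minus coeff_emb_1 coeff_emb_power)

lemma qpoch_0: "qpoch 0 = 1"
  by (simp add: qpoch_def)

lemma main_X: "gen_eval R_inv AIO phi_inv [(1, [(VX, i, False)])]
           = (1 - fps_const (inverse Xv * Yv)
                  * fps_compose e_q (fps_const ((Xv - Yv) * Qv ^ i) * fps_X))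
             / fps_const (Xv - Yv :: 'k::idom ratfun)"
proof (rule fps_ext)
  fix n
  have XY: "Xv - Yv \<noteq> (0 :: 'k ratfun)" using Xv_Yv by simp
  show "gen_eval R_inv AIO phi_inv [(1, [(VX, i, False)])] $ n = ((1 - fps_const (inverse Xv * Yv)
                  * fps_compose e_q (fps_const ((Xv - Yv) * Qv ^ i) * fps_X))
             / fps_const (Xv - Yv :: 'k::idom ratfun)) $ n"
  proof (cases n)
    case 0
    then show ?thesis
    proof -
      have "1 - inverse Xv * Yv = (Xv - Yv) * inverse (Xv :: 'k ratfun)"
        using Xv_nz[where 'k='k] by (simp add: algebra_simps)
      then show ?thesis
        using 0 XY
        by (simp add: gen_eval_def qder_pow_0 eval_elem_def eval_word_def phi_inv_def e_q_def qpoch_0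
          coeff_emb_1)
    qed
  next
    case (Suc m)
    have L: "gen_eval R_inv AIO phi_inv [(1, [(VX, i, False)])] $ n
        = ((-1) ^ Suc m * Qv ^ (i * Suc m) * (inverse Xv * Yv) * (Yv - Xv) ^ m) / qpoch (Suc m)"
      by (simp add: gen_eval_def Suc eval_X coeff_emb_cX)
    have R: "((1 - fps_const (inverse Xv * Yv)
                  * fps_compose e_q (fps_const ((Xv - Yv) * Qv ^ i) * fps_X))
             / fps_const (Xv - Yv :: 'k::idom ratfun)) $ n
        = (- inverse (Xv - Yv) * (inverse Xv * Yv) * ((Xv - Yv) * Qv ^ i) ^ Suc m) / qpoch (Suc m)"
      by (simp add: Suc e_q_def)
    have A: "(-1) ^ Suc m * Qv ^ (i * Suc m) * (inverse Xv * Yv) * (Yv - Xv) ^ m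
          = - inverse (Xv - Yv) * (inverse Xv * Yv) * ((Xv - Yv) * Qv ^ i :: 'k ratfun) ^ Suc m"
    proof -
      have e1: "(Yv - Xv) ^ m = (-1) ^ m * (Xv - Yv :: 'k ratfun) ^ m"
        by (metis minus_diff_eq power_minus)
      have e2: "((Xv - Yv) * Qv ^ i) ^ Suc m = (Xv - Yv) * (Qv ^ i * ((Xv - Yv) ^ m * (Qv ^ i) ^ m :: 'k ratfun))"
        by (simp only: power_mult_distrib power_Suc mult.assoc)
      have e5: "(Qv :: 'k ratfun) ^ (i * Suc m) = Qv ^ i * (Qv ^ i) ^ m"
        by (simp only: mult_Suc_right power_add power_mult)
      have e3: "inverse (Xv - Yv) * (Xv - Yv) = (1 :: 'k ratfun)" using XY by simp
      have e4: "(-1) ^ Suc m * (-1) ^ m = (-1 :: 'k ratfun)"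
      proof -
        have "(-1 :: 'k ratfun) ^ m * (-1) ^ m = ((-1) * (-1)) ^ m" by (simp only: power_mult_distrib)
        then have "(-1 :: 'k ratfun) ^ m * (-1) ^ m = 1" by simp
        then show ?thesis by simp
      qed
      define Z where "Z = Qv ^ i * (Qv ^ i) ^ m * (inverse Xv * Yv) * (Xv - Yv :: 'k ratfun) ^ m"
      have l: "(-1) ^ Suc m * Qv ^ (i * Suc m) * (inverse Xv * Yv) * (Yv - Xv) ^ m
           = ((-1) ^ Suc m * (-1) ^ m) * Z"
        unfolding e1 e5 Z_def by (simp only: ac_simps)
      have r: "- inverse (Xv - Yv) * (inverse Xv * Yv) * ((Xv - Yv) * Qv ^ i) ^ Suc m
           = - ((inverse (Xv - Yv) * (Xv - Yv)) * Z)"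
        unfolding e2 Z_def by (simp only: mult_minus_left mult_minus_right ac_simps)
      show ?thesis unfolding l r e3 e4 by simp
    qed
    show ?thesis by (simp only: L R A)
  qed
qed

lemma main_Y: "gen_eval R_inv AIO phi_inv [(1, [(VY, i, False)])]
           = (1 - fps_const (Xv * inverse Yv)
                  * fps_compose E_q (fps_const ((Yv - Xv) * Qv ^ i) * fps_X))
             / fps_const (Yv - Xv :: 'k::idom ratfun)"
proof (rule fps_ext)
  fix n
  have XY: "Yv - Xv \<noteq> (0 :: 'k ratfun)" using Xv_Yv by (metis eq_iff_diff_eq_0)
  show "gen_eval R_inv AIO phi_inv [(1, [(VY, i, False)])] $ n = ((1 - fps_const (Xv * inverse Yv)
                  * fps_compose E_q (fps_const ((Yv - Xv) * Qv ^ i) * fps_X))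
             / fps_const (Yv - Xv :: 'k::idom ratfun)) $ n"
  proof (cases n)
    case 0
    then show ?thesis
    proof -
      have "1 - Xv * inverse Yv = (Yv - Xv) * inverse (Yv :: 'k ratfun)"
        using Yv_nz[where 'k='k] by (simp add: algebra_simps)
      then show ?thesis
        using 0 XY
        by (simp add: gen_eval_def qder_pow_0 eval_elem_def eval_word_def phi_inv_def E_q_def qpoch_0
          coeff_emb_1 numeral_2_eq_2)
    qed
  next
    case (Suc m)
    define C where "C = (Suc m choose 2)"
    have L: "gen_eval R_inv AIO phi_inv [(1, [(VY, i, False)])] $ n
        = ((-1) ^ Suc m * Qv ^ (i * Suc m + C) * (Xv * inverse Yv) * (Xv - Yv) ^ m) / qpoch (Suc m)"
      by (simp add: gen_eval_def Suc eval_Y coeff_emb_cY C_def)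
    have R: "((1 - fps_const (Xv * inverse Yv)
                  * fps_compose E_q (fps_const ((Yv - Xv) * Qv ^ i) * fps_X))
             / fps_const (Yv - Xv :: 'k::idom ratfun)) $ n
        = (- inverse (Yv - Xv) * (Xv * inverse Yv) * (((Yv - Xv) * Qv ^ i) ^ Suc m * Qv ^ C)) / qpoch (Suc m)"
      by (simp add: Suc E_q_def C_def)
    have A: "(-1) ^ Suc m * Qv ^ (i * Suc m + C) * (Xv * inverse Yv) * (Xv - Yv) ^ m
          = - inverse (Yv - Xv) * (Xv * inverse Yv) * (((Yv - Xv) * Qv ^ i :: 'k ratfun) ^ Suc m * Qv ^ C)"
    proof -
      have e1: "(Xv - Yv) ^ m = (-1) ^ m * (Yv - Xv :: 'k ratfun) ^ m"
        by (metis minus_diff_eq power_minus)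
      have e2: "((Yv - Xv) * Qv ^ i) ^ Suc m = (Yv - Xv) * (Qv ^ i * ((Yv - Xv) ^ m * (Qv ^ i) ^ m :: 'k ratfun))"
        by (simp only: power_mult_distrib power_Suc mult.assoc)
      have e5: "(Qv :: 'k ratfun) ^ (i * Suc m + C) = Qv ^ i * (Qv ^ i) ^ m * Qv ^ C"
        by (simp only: mult_Suc_right power_add power_mult)
      have e3: "inverse (Yv - Xv) * (Yv - Xv) = (1 :: 'k ratfun)" using XY by simp
      have e4: "(-1) ^ Suc m * (-1) ^ m = (-1 :: 'k ratfun)"
      proof -
        have "(-1 :: 'k ratfun) ^ m * (-1) ^ m = ((-1) * (-1)) ^ m" by (simp only: power_mult_distrib)
        then have "(-1 :: 'k ratfun) ^ m * (-1) ^ m = 1" by simp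
        then show ?thesis by simp
      qed
      define Z where "Z = Qv ^ i * (Qv ^ i) ^ m * Qv ^ C * (Xv * inverse Yv) * (Yv - Xv :: 'k ratfun) ^ m"
      have l: "(-1) ^ Suc m * Qv ^ (i * Suc m + C) * (Xv * inverse Yv) * (Xv - Yv) ^ m
           = ((-1) ^ Suc m * (-1) ^ m) * Z"
        unfolding e1 e5 Z_def by (simp only: ac_simps)
      have r: "- inverse (Yv - Xv) * (Xv * inverse Yv) * (((Yv - Xv) * Qv ^ i) ^ Suc m * Qv ^ C)
           = - ((inverse (Yv - Xv) * (Yv - Xv)) * Z)"
        unfolding e2 Z_def by (simp only: mult_minus_left mult_minus_right ac_simps)
      show ?thesis unfolding l r e3 e4 by simp
    qed
    show ?thesis by (simp only: L R A)
  qed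
qed

theorem corollary5p6:
  fixes i :: nat
  shows "gen_eval R_inv AIO phi_inv [(1, [(VX, i, False)])]
           = (1 - fps_const (inverse Xv * Yv)
                  * fps_compose e_q (fps_const ((Xv - Yv) * Qv ^ i) * fps_X))
             / fps_const (Xv - Yv :: ('k::{idom, ring_char_0}) ratfun)
       \<and> gen_eval R_inv AIO phi_inv [(1, [(VY, i, False)])]
           = (1 - fps_const (Xv * inverse Yv)
                  * fps_compose E_q (fps_const ((Yv - Xv) * Qv ^ i) * fps_X))
             / fps_const (Yv - Xv :: 'k ratfun)"
  using main_X main_Y by blast

end
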